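(* Let $\psi^+$ be a rooted binary topological tree on $X$ and $\kappa\ge2$. For each internal vertex $v$ of $\psi^+$ fix two taxa $a,b$ with $v=\operatorname{MRCA}(a,b)$, and let $\mathcal S_v$ be the set of linear equations (in the entries of an indeterminate tensor $P$) expressing that every matrix slice of $P_{ab}$, obtained by fixing the indices of all taxa in $X\setminus\operatorname{desc}(v)$, is symmetric, where $P_{ab}$ denotes the marginalization of $P$ over all indices of taxa in $\operatorname{desc}(v)\setminus\{a,b\}$. For leaves $v$ set $\mathcal S_v=\emptyset$. Then the set $\mathcal S=\bigcup_{v}\mathcal S_v$ defines the linear space $L(\psi^+)$ (regardless of which pairs $a,b$ are chosen).
   Context: Consider real $|X|$-way $\kappa\times\cdots\times\kappa$ tensors $P$ with one index per taxon in $X$. For $Y\subseteq X$, $P_Y$ is the marginalization to $Y$; $\psi^+|_Y$ is the induced rooted subtree; a 2-clade is a pair of leaves that are exactly the leaf descendants of some vertex. $L(\psi^+)$ is the linear space of all real tensors $P$ such that for every $Y\subseteq X$ and every 2-clade $\{a,b\}$ of $\psi^+|_Y$, $P_Y$ is invariant under exchanging the $a$ and $b$ indices. $\operatorname{desc}(v)$ is the set of taxa (leaves) descended from $v$, and $\operatorname{MRCA}(a,b)$ is the most recent common ancestor of leaves $a,b$. *)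

theory Defs
  imports Complex_Main "HOL-Library.FuncSet"
begin

(* A rooted topological tree on the taxon set X is represented by its cluster system T:
   the vertex v is identified with desc(v), the set of taxa below it. *)

definition children :: "'a set set \<Rightarrow> 'a set \<Rightarrow> 'a set set" where
  "children T c = {d \<in> T. d \<subset> c \<and> \<not> (\<exists>e\<in>T. d \<subset> e \<and> e \<subset> c)}"

definition rooted_binary_tree :: "'a set \<Rightarrow> 'a set set \<Rightarrow> bool" where
  "rooted_binary_tree X T \<longleftrightarrow>
     finite X \<and> X \<noteq> {} \<and> X \<in> T \<and> (\<forall>x\<in>X. {x} \<in> T) \<and>
     (\<forall>c\<in>T. c \<noteq> {} \<and> c \<subseteq> X) \<and>
     (\<forall>c\<in>T. \<forall>d\<in>T. c \<subseteq> d \<or> d \<subseteq> c \<or> c \<inter> d = {}) \<and>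
     (\<forall>c\<in>T. 2 \<le> card c \<longrightarrow> card (children T c) = 2)"

definition internal :: "'a set set \<Rightarrow> 'a set \<Rightarrow> bool" where
  "internal T c \<longleftrightarrow> c \<in> T \<and> 2 \<le> card c"

definition is_mrca :: "'a set set \<Rightarrow> 'a set \<Rightarrow> 'a \<Rightarrow> 'a \<Rightarrow> bool" where
  "is_mrca T c a b \<longleftrightarrow> c \<in> T \<and> a \<in> c \<and> b \<in> c \<and> (\<forall>d\<in>T. a \<in> d \<and> b \<in> d \<longrightarrow> c \<subseteq> d)"

(* {a,b} is a 2-clade of the induced rooted subtree T|_Y: some vertex of T|_Y has leaf set {a,b};
   the leaf sets of vertices of T|_Y are exactly the nonempty sets c \<inter> Y, c \<in> T *)
definition two_clade :: "'a set set \<Rightarrow> 'a set \<Rightarrow> 'a \<Rightarrow> 'a \<Rightarrow> bool" where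
  "two_clade T Y a b \<longleftrightarrow> a \<noteq> b \<and> a \<in> Y \<and> b \<in> Y \<and> (\<exists>c\<in>T. c \<inter> Y = {a, b})"

abbreviation idx :: "'a set \<Rightarrow> nat \<Rightarrow> ('a \<Rightarrow> nat) set" where
  "idx Y k \<equiv> PiE Y (\<lambda>_. {..<k})"

definition marg :: "'a set \<Rightarrow> nat \<Rightarrow> 'a set \<Rightarrow> (('a \<Rightarrow> nat) \<Rightarrow> real) \<Rightarrow> ('a \<Rightarrow> nat) \<Rightarrow> real" where
  "marg X k Y P j = (\<Sum>i \<in> {i \<in> idx X k. \<forall>y\<in>Y. i y = j y}. P i)"

definition swap_invariant :: "'a set \<Rightarrow> nat \<Rightarrow> 'a set \<Rightarrow> 'a \<Rightarrow> 'a \<Rightarrow> (('a \<Rightarrow> nat) \<Rightarrow> real) \<Rightarrow> bool" where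
  "swap_invariant X k Y a b P \<longleftrightarrow>
     (\<forall>j \<in> idx Y k. marg X k Y P j = marg X k Y P (j(a := j b, b := j a)))"

definition Lspace :: "'a set \<Rightarrow> nat \<Rightarrow> 'a set set \<Rightarrow> (('a \<Rightarrow> nat) \<Rightarrow> real) set" where
  "Lspace X k T = {P. \<forall>Y. Y \<subseteq> X \<longrightarrow> (\<forall>a b. two_clade T Y a b \<longrightarrow> swap_invariant X k Y a b P)}"

(* P satisfies the equations S_v for internal vertex c with chosen pair a b:
   P_ab = P marginalized over desc(v) - {a,b}, i.e. P_{(X - c) \<union> {a,b}};
   every matrix slice (fixing indices l of taxa in X - c) is symmetric *)
definition satisfies_Sv :: "'a set \<Rightarrow> nat \<Rightarrow> 'a set \<Rightarrow> 'a \<Rightarrow> 'a \<Rightarrow> (('a \<Rightarrow> nat) \<Rightarrow> real) \<Rightarrow> bool" where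
  "satisfies_Sv X k c a b P \<longleftrightarrow>
     (\<forall>l \<in> idx (X - c) k. \<forall>s<k. \<forall>t<k.
        marg X k ((X - c) \<union> {a, b}) P (l(a := s, b := t)) =
        marg X k ((X - c) \<union> {a, b}) P (l(a := t, b := s)))"

definition Ssol :: "'a set \<Rightarrow> nat \<Rightarrow> 'a set set \<Rightarrow> ('a set \<Rightarrow> 'a \<times> 'a) \<Rightarrow> (('a \<Rightarrow> nat) \<Rightarrow> real) set" where
  "Ssol X k T ab = {P. \<forall>c. internal T c \<longrightarrow> satisfies_Sv X k c (fst (ab c)) (snd (ab c)) P}"

end

theory Submission
  imports Defs
begin


definition tau :: "'a \<Rightarrow> 'a \<Rightarrow> 'a \<Rightarrow> 'a" where
  "tau x y z = (if z = x then y else if z = y then x else z)"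

lemma tau_tau[simp]: "tau x y (tau x y z) = z" by (auto simp: tau_def)
lemma tau_comm: "tau x y = tau y x" by (auto simp: tau_def fun_eq_iff)
lemma tau_x[simp]: "tau x y x = y" by (auto simp: tau_def)
lemma tau_y[simp]: "tau x y y = x" by (auto simp: tau_def)
lemma tau_out[simp]: "z \<noteq> x \<Longrightarrow> z \<noteq> y \<Longrightarrow> tau x y z = z" by (auto simp: tau_def)

lemma tau_image: "x \<in> A \<Longrightarrow> y \<in> A \<Longrightarrow> tau x y ` A = A"
  by (auto simp: tau_def)

lemma tau_image_insert: "x \<notin> W \<Longrightarrow> y \<notin> W \<Longrightarrow> tau x y ` insert x W = insert y W"
  by (force simp: tau_def image_iff)

lemma comp_tau_PiE: assumes "x\<in>X" "y\<in>X" "i \<in> idx X k" shows "i \<circ> tau x y \<in> idx X k"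
  using assms unfolding PiE_iff extensional_def tau_def by auto

lemma marg_cong: "(\<forall>y\<in>Y. j y = j' y) \<Longrightarrow> marg X k Y P j = marg X k Y P j'"
  unfolding marg_def by (rule sum.cong) auto

lemma marg_zero: "y \<in> Y \<Longrightarrow> y \<in> X \<Longrightarrow> k \<le> j y \<Longrightarrow> marg X k Y P j = 0"
proof -
  assume a: "y \<in> Y" "y \<in> X" "k \<le> j y"
  have "{i \<in> idx X k. \<forall>y\<in>Y. i y = j y} = {}"
  proof (rule ccontr)
    assume "{i \<in> idx X k. \<forall>y\<in>Y. i y = j y} \<noteq> {}"
    then obtain i where "i \<in> idx X k" "i y = j y" using a by blast
    then have "j y < k" using a(2) by (auto simp: PiE_iff)
    then show False using a(3) by simp
  qed
  then show ?thesis unfolding marg_def by (simp only: sum.empty)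
qed

lemma M2:
  assumes "x\<in>X" "y\<in>X"
  shows "marg X k Y (\<lambda>i. P (i \<circ> tau x y)) j = marg X k (tau x y ` Y) P (j \<circ> tau x y)"
proof -
  let ?h = "\<lambda>i. i \<circ> tau x y"
  let ?A = "{i \<in> idx X k. \<forall>w\<in>Y. i w = j w}"
  let ?B = "{i \<in> idx X k. \<forall>w\<in>tau x y ` Y. i w = (j \<circ> tau x y) w}"
  have hh: "\<And>i. ?h (?h i) = i" by (simp add: fun_eq_iff)
  have "bij_betw ?h ?A ?B"
  proof (rule bij_betw_byWitness[where f'= ?h])
    show "\<forall>a\<in>?A. ?h (?h a) = a" using hh by blast
    show "\<forall>a\<in>?B. ?h (?h a) = a" using hh by blast
    show "?h ` ?A \<subseteq> ?B"
    proof
      fix i' assume "i' \<in> ?h ` ?A"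
      then obtain i where i: "i \<in> ?A" "i' = ?h i" by blast
      then show "i' \<in> ?B" using comp_tau_PiE[OF assms, of i k] by auto
    qed
    show "?h ` ?B \<subseteq> ?A"
    proof
      fix i' assume "i' \<in> ?h ` ?B"
      then obtain i where i: "i \<in> ?B" "i' = ?h i" by blast
      have "\<forall>w\<in>Y. i (tau x y w) = j w"
      proof
        fix w assume "w \<in> Y"
        then have "tau x y w \<in> tau x y ` Y" by blast
        then have "i (tau x y w) = (j \<circ> tau x y) (tau x y w)" using i(1) by blast
        then show "i (tau x y w) = j w" by simp
      qed
      then show "i' \<in> ?A" using i comp_tau_PiE[OF assms, of i k] by auto
    qed
  qed
  then show ?thesis unfolding marg_def by (rule sum.reindex_bij_betw)
qed

lemma marg_trans:
  assumes "finite X" "Z \<subseteq> Y" "Y \<subseteq> X"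
  shows "marg X k Z P j = (\<Sum>j'\<in>{j'\<in>idx Y k. \<forall>z\<in>Z. j' z = j z}. marg X k Y P j')"
proof -
  let ?S = "{i \<in> idx X k. \<forall>z\<in>Z. i z = j z}"
  let ?T = "{j'\<in>idx Y k. \<forall>z\<in>Z. j' z = j z}"
  let ?g = "\<lambda>i. restrict i Y"
  have fX: "finite (idx X k)" using assms(1) by (simp add: finite_PiE)
  have fS: "finite ?S" using fX by simp
  have fY: "finite Y" using assms finite_subset by blast
  have fYY: "finite (idx Y k)" using fY by (simp add: finite_PiE)
  have fT: "finite ?T" using fYY by simp
  have sub: "?g ` ?S \<subseteq> ?T"
  proof
    fix j' assume "j' \<in> ?g ` ?S"
    then obtain i where i: "i \<in> ?S" "j' = ?g i" by blast
    have "?g i \<in> idx Y k" using i(1) assms(3) by (auto simp: PiE_iff)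
    moreover have "\<forall>z\<in>Z. ?g i z = j z" using i(1) assms(2) by auto
    ultimately show "j' \<in> ?T" using i(2) by blast
  qed
  have "(\<Sum>j'\<in>?T. sum P {i. i \<in> ?S \<and> ?g i = j'}) = sum P ?S" by (rule sum.group[OF fS fT sub])
  moreover have eqs: "\<And>j'. j'\<in>?T \<Longrightarrow> {i. i \<in> ?S \<and> ?g i = j'} = {i\<in>idx X k. \<forall>y\<in>Y. i y = j' y}"
  proof -
    fix j' assume j': "j' \<in> ?T"
    show "{i. i \<in> ?S \<and> ?g i = j'} = {i\<in>idx X k. \<forall>y\<in>Y. i y = j' y}"
    proof (intro set_eqI iffI)
      fix i assume "i \<in> {i. i \<in> ?S \<and> ?g i = j'}"
      then show "i \<in> {i\<in>idx X k. \<forall>y\<in>Y. i y = j' y}" by auto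
    next
      fix i assume i: "i \<in> {i\<in>idx X k. \<forall>y\<in>Y. i y = j' y}"
      have "?g i = j'" using i j' by (auto simp: fun_eq_iff PiE_iff extensional_def)
      moreover have "\<forall>z\<in>Z. i z = j z" using i j' assms(2) by auto
      ultimately show "i \<in> {i. i \<in> ?S \<and> ?g i = j'}" using i by auto
    qed
  qed
  moreover have "(\<Sum>j'\<in>?T. sum P {i. i \<in> ?S \<and> ?g i = j'}) = (\<Sum>j'\<in>?T. sum P {i\<in>idx X k. \<forall>y\<in>Y. i y = j' y})"
    by (rule sum.cong[OF refl], rule arg_cong[where f="sum P"], rule eqs)
  ultimately have "(\<Sum>j'\<in>?T. sum P {i\<in>idx X k. \<forall>y\<in>Y. i y = j' y}) = sum P ?S"
    by simp
  then show ?thesis unfolding marg_def by simp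
qed

lemma M1:
  assumes "finite X" "Z \<subseteq> Y" "Y \<subseteq> X" "\<forall>j. marg X k Y P j = marg X k Y Q j"
  shows "marg X k Z P j = marg X k Z Q j"
  using assms by (simp add: marg_trans)

definition R :: "'a set \<Rightarrow> nat \<Rightarrow> (('a \<Rightarrow> nat) \<Rightarrow> real) \<Rightarrow> 'a set \<Rightarrow> 'a \<Rightarrow> 'a \<Rightarrow> bool" where
  "R X k P W x y \<longleftrightarrow> (\<forall>j. marg X k (insert x W) P j = marg X k (insert y W) P (j(y := j x)))"

definition Sim :: "'a set \<Rightarrow> nat \<Rightarrow> (('a \<Rightarrow> nat) \<Rightarrow> real) \<Rightarrow> 'a set \<Rightarrow> 'a \<Rightarrow> 'a \<Rightarrow> bool" where
  "Sim X k P Y x y \<longleftrightarrow> (\<forall>j. marg X k Y P j = marg X k Y (\<lambda>i. P (i \<circ> tau x y)) j)"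

lemma R_refl: "R X k P W x x" by (simp add: R_def)

lemma R_sym:
  assumes "R X k P W x y" "x \<notin> W" shows "R X k P W y x"
  unfolding R_def
proof
  fix j
  show "marg X k (insert y W) P j = marg X k (insert x W) P (j(x := j y))"
  proof (cases "x = y")
    case True then show ?thesis by simp
  next
    case False
    have "marg X k (insert x W) P (j(x := j y)) = marg X k (insert y W) P ((j(x := j y))(y := (j(x := j y)) x))"
      using assms(1) unfolding R_def by blast
    also have "\<dots> = marg X k (insert y W) P j"
      by (rule marg_cong) (use False assms(2) in auto)
    finally show ?thesis by simp
  qed
qed

lemma R_trans:
  assumes "R X k P W x y" "R X k P W y z" "y \<notin> W" shows "R X k P W x z"
  unfolding R_def
proof
  fix j
  have "marg X k (insert x W) P j = marg X k (insert y W) P (j(y := j x))"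
    using assms(1) unfolding R_def by blast
  also have "\<dots> = marg X k (insert z W) P ((j(y := j x))(z := (j(y := j x)) y))"
    using assms(2) unfolding R_def by blast
  also have "\<dots> = marg X k (insert z W) P (j(z := j x))"
    by (rule marg_cong) (use assms(3) in auto)
  finally show "marg X k (insert x W) P j = marg X k (insert z W) P (j(z := j x))" .
qed

lemma R_Sim:
  assumes "x \<in> X" "y \<in> X" "x \<notin> W" "y \<notin> W"
  shows "R X k P W x y \<longleftrightarrow> Sim X k P (insert x W) x y"
proof -
  have "\<And>j. marg X k (insert x W) (\<lambda>i. P (i \<circ> tau x y)) j = marg X k (insert y W) P (j(y := j x))"
  proof -
    fix j
    have "marg X k (insert x W) (\<lambda>i. P (i \<circ> tau x y)) j = marg X k (tau x y ` insert x W) P (j \<circ> tau x y)"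
      by (rule M2[OF assms(1,2)])
    also have "\<dots> = marg X k (insert y W) P (j \<circ> tau x y)"
      using tau_image_insert[OF assms(3,4)] by simp
    also have "\<dots> = marg X k (insert y W) P (j(y := j x))"
      by (rule marg_cong) (use assms(3,4) in \<open>auto simp: tau_def\<close>)
    finally show "marg X k (insert x W) (\<lambda>i. P (i \<circ> tau x y)) j = marg X k (insert y W) P (j(y := j x))" .
  qed
  then show ?thesis unfolding R_def Sim_def by simp
qed

lemma Sim_restrict:
  assumes "finite X" "Sim X k P Y x y" "Z \<subseteq> Y" "Y \<subseteq> X"
  shows "Sim X k P Z x y"
  using M1[OF assms(1,3,4)] assms(2) unfolding Sim_def by blast

lemma Sim_swap:
  assumes "Sim X k P Y x y" "x \<in> X" "y \<in> X" "x \<in> Y" "y \<in> Y"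
  shows "marg X k Y P j = marg X k Y P (j \<circ> tau x y)"
proof -
  have "marg X k Y P j = marg X k Y (\<lambda>i. P (i \<circ> tau x y)) j" using assms(1) unfolding Sim_def by blast
  also have "\<dots> = marg X k (tau x y ` Y) P (j \<circ> tau x y)" by (rule M2[OF assms(2,3)])
  also have "\<dots> = marg X k Y P (j \<circ> tau x y)" using tau_image[OF assms(4,5)] by simp
  finally show ?thesis .
qed

lemma swap_Sim:
  assumes "\<forall>j. marg X k Y P j = marg X k Y P (j \<circ> tau x y)" "x \<in> X" "y \<in> X" "x \<in> Y" "y \<in> Y"
  shows "Sim X k P Y x y"
  unfolding Sim_def
proof
  fix j
  have "marg X k Y (\<lambda>i. P (i \<circ> tau x y)) j = marg X k (tau x y ` Y) P (j \<circ> tau x y)" by (rule M2[OF assms(2,3)])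
  also have "\<dots> = marg X k Y P (j \<circ> tau x y)" using tau_image[OF assms(4,5)] by simp
  finally show "marg X k Y P j = marg X k Y (\<lambda>i. P (i \<circ> tau x y)) j" using assms(1) by simp
qed

lemma R_restrict:
  assumes "finite X" "x \<in> X" "y \<in> X" "W \<subseteq> X" "x \<notin> W" "y \<notin> W" "Z \<subseteq> W" "R X k P W x y"
  shows "R X k P Z x y"
proof -
  have "Sim X k P (insert x W) x y" using R_Sim[OF assms(2,3,5,6)] assms(8) by simp
  moreover have "insert x Z \<subseteq> insert x W" "insert x W \<subseteq> X" using assms by auto
  ultimately have "Sim X k P (insert x Z) x y" by (rule Sim_restrict[OF assms(1)])
  moreover have "x \<notin> Z" "y \<notin> Z" using assms by auto
  ultimately show ?thesis using R_Sim[OF assms(2,3)] by blast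
qed

lemma Sv_Sim:
  assumes "c \<subseteq> X" "p \<in> c" "q \<in> c" "p \<noteq> q" "satisfies_Sv X k c p q P"
  shows "Sim X k P ((X - c) \<union> {p, q}) p q"
proof -
  let ?Y = "(X - c) \<union> {p, q}"
  have pX: "p \<in> X" and qX: "q \<in> X" using assms by auto
  have "\<forall>j. marg X k ?Y P j = marg X k ?Y P (j \<circ> tau p q)"
  proof
    fix j
    show "marg X k ?Y P j = marg X k ?Y P (j \<circ> tau p q)"
    proof (cases "\<exists>y\<in>?Y. k \<le> j y")
      case True
      then obtain y where y: "y \<in> ?Y" "k \<le> j y" by blast
      have yX: "y \<in> X" using y(1) pX qX by blast
      have "tau p q y \<in> ?Y" using y(1) by (auto simp: tau_def)
      moreover have "tau p q y \<in> X" using yX pX qX by (auto simp: tau_def)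
      moreover have "k \<le> (j \<circ> tau p q) (tau p q y)" using y(2) by simp
      ultimately have "marg X k ?Y P (j \<circ> tau p q) = 0" by (rule marg_zero)
      moreover have "marg X k ?Y P j = 0" using y(1) yX y(2) by (rule marg_zero)
      ultimately show ?thesis by simp
    next
      case False
      then have lt: "\<forall>y\<in>?Y. j y < k" by (simp add: not_le)
      define l where "l = restrict j (X - c)"
      have l: "l \<in> idx (X - c) k" using lt unfolding l_def by (auto simp: PiE_iff)
      have jp: "j p < k" and jq: "j q < k" using lt by auto
      have eq: "marg X k ?Y P (l(p := j p, q := j q)) = marg X k ?Y P (l(p := j q, q := j p))"
        using assms(5) l jp jq unfolding satisfies_Sv_def by blast
      have "marg X k ?Y P j = marg X k ?Y P (l(p := j p, q := j q))"
        by (rule marg_cong) (use assms(2,3) in \<open>auto simp: l_def\<close>)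
      also have "\<dots> = marg X k ?Y P (l(p := j q, q := j p))" by (rule eq)
      also have "\<dots> = marg X k ?Y P (j \<circ> tau p q)"
        by (rule marg_cong) (use assms(2,3,4) in \<open>auto simp: l_def tau_def\<close>)
      finally show ?thesis .
    qed
  qed
  then show ?thesis by (rule swap_Sim) (use pX qX in auto)
qed

lemma tree_facts:
  assumes "rooted_binary_tree X T"
  shows "finite X" "\<And>x. x \<in> X \<Longrightarrow> {x} \<in> T" "\<And>c. c \<in> T \<Longrightarrow> c \<subseteq> X"
    "\<And>c. c \<in> T \<Longrightarrow> finite c"
    "\<And>c d. c \<in> T \<Longrightarrow> d \<in> T \<Longrightarrow> c \<subseteq> d \<or> d \<subseteq> c \<or> c \<inter> d = {}"
    "\<And>c. c \<in> T \<Longrightarrow> 2 \<le> card c \<Longrightarrow> card (children T c) = 2"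
proof -
  show "finite X" using assms unfolding rooted_binary_tree_def by blast
  show "\<And>x. x \<in> X \<Longrightarrow> {x} \<in> T" using assms unfolding rooted_binary_tree_def by blast
  show cX: "\<And>c. c \<in> T \<Longrightarrow> c \<subseteq> X" using assms unfolding rooted_binary_tree_def by blast
  show "\<And>c. c \<in> T \<Longrightarrow> finite c" using cX assms unfolding rooted_binary_tree_def by (meson rev_finite_subset)
  show "\<And>c d. c \<in> T \<Longrightarrow> d \<in> T \<Longrightarrow> c \<subseteq> d \<or> d \<subseteq> c \<or> c \<inter> d = {}"
    using assms unfolding rooted_binary_tree_def by blast
  show "\<And>c. c \<in> T \<Longrightarrow> 2 \<le> card c \<Longrightarrow> card (children T c) = 2"
    using assms unfolding rooted_binary_tree_def by blast
qed

lemma mrca_neq: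
  assumes "rooted_binary_tree X T" "is_mrca T c u v" "2 \<le> card c"
  shows "u \<noteq> v"
proof
  assume uv: "u = v"
  have cT: "c \<in> T" "u \<in> c" using assms(2) unfolding is_mrca_def by auto
  have "{u} \<in> T" using tree_facts(2,3)[OF assms(1)] cT by blast
  then have "c \<subseteq> {u}" using assms(2) uv unfolding is_mrca_def by blast
  then have "card c \<le> 1" by (metis card.empty card.insert card_mono empty_iff finite.intros(1) finite_insert le_zero_eq nat_le_linear One_nat_def subset_singleton_iff)
  then show False using assms(3) by simp
qed

lemma TL:
  assumes tree: "rooted_binary_tree X T" and c: "c \<in> T" "2 \<le> card c" and m: "is_mrca T c u v"
  shows "\<exists>e1 e2. e1 \<in> T \<and> e2 \<in> T \<and> e1 \<subset> c \<and> e2 \<subset> c \<and> e1 \<inter> e2 = {} \<and> u \<in> e1 \<and> v \<in> e2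
      \<and> (\<forall>x\<in>c. x \<in> e1 \<or> x \<in> e2)"
proof -
  note tf = tree_facts[OF tree]
  have cX: "c \<subseteq> X" and fc: "finite c" using tf c by auto
  have inchild: "\<exists>e\<in>children T c. x \<in> e" if x: "x \<in> c" for x
  proof -
    have sx: "{x} \<in> T" using tf(2) cX x by blast
    have "c \<noteq> {x}" using c(2) by auto
    then have sxc: "{x} \<subset> c" using x by blast
    let ?Q = "\<lambda>e. e \<in> T \<and> x \<in> e \<and> e \<subset> c"
    have "?Q {x}" using sx sxc by blast
    then obtain e where e: "?Q e" and emin: "\<forall>f. ?Q f \<longrightarrow> card c - card e \<le> card c - card f"
      using ex_has_least_nat[of ?Q "{x}" "\<lambda>e. card c - card e"] by blast
    have "\<not> (\<exists>f\<in>T. e \<subset> f \<and> f \<subset> c)"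
    proof
      assume "\<exists>f\<in>T. e \<subset> f \<and> f \<subset> c"
      then obtain f where f: "f \<in> T" "e \<subset> f" "f \<subset> c" by blast
      have "card e < card f" using f fc by (meson psubset_card_mono rev_finite_subset psubset_imp_subset)
      moreover have "card f < card c" using f fc by (meson psubset_card_mono)
      moreover have "?Q f" using f e by blast
      moreover have "card c - card e \<le> card c - card f" using emin \<open>?Q f\<close> by blast
      ultimately show False by linarith
    qed
    then have "e \<in> children T c" using e unfolding children_def by blast
    then show ?thesis using e by blast
  qed
  have disj: "e \<inter> f = {}" if "e \<in> children T c" "f \<in> children T c" "e \<noteq> f" for e f
  proof -
    have ef: "e \<in> T" "f \<in> T" "e \<subset> c" "f \<subset> c" "\<not> (\<exists>g\<in>T. e \<subset> g \<and> g \<subset> c)" "\<not> (\<exists>g\<in>T. f \<subset> g \<and> g \<subset> c)"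
      using that unfolding children_def by auto
    have "e \<subseteq> f \<or> f \<subseteq> e \<or> e \<inter> f = {}" using tf(5)[OF ef(1,2)] .
    then show ?thesis
    proof (elim disjE)
      assume "e \<subseteq> f" then have "e \<subset> f" using that(3) by auto
      then show ?thesis using ef(2,4,5) by auto
    next
      assume "f \<subseteq> e" then have "f \<subset> e" using that(3) by auto
      then show ?thesis using ef(1,3,6) by auto
    qed
  qed
  have "card (children T c) = 2" using tf(6) c by blast
  then obtain e1 e2 where ch: "children T c = {e1, e2}" "e1 \<noteq> e2" by (metis card_2_iff)
  have uc: "u \<in> c" and vc: "v \<in> c" using m unfolding is_mrca_def by auto
  obtain eu where eu: "eu \<in> children T c" "u \<in> eu" using inchild[OF uc] by blast
  obtain ev where ev: "ev \<in> children T c" "v \<in> ev" using inchild[OF vc] by blast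
  have euT: "eu \<in> T" "eu \<subset> c" and evT: "ev \<in> T" "ev \<subset> c" using eu ev unfolding children_def by auto
  have neq: "eu \<noteq> ev"
  proof
    assume "eu = ev"
    then have "c \<subseteq> eu" using m eu ev euT unfolding is_mrca_def by blast
    then show False using euT by blast
  qed
  have cover: "\<forall>x\<in>c. x \<in> eu \<or> x \<in> ev"
  proof
    fix x assume "x \<in> c"
    then obtain e where e: "e \<in> children T c" "x \<in> e" using inchild by blast
    have "e \<in> {e1, e2}" "eu \<in> {e1, e2}" "ev \<in> {e1, e2}" using e(1) eu(1) ev(1) ch by auto
    then have "e = eu \<or> e = ev" using neq by auto
    then show "x \<in> eu \<or> x \<in> ev" using e by blast
  qed
  show ?thesis using euT evT disj[OF eu(1) ev(1) neq] eu(2) ev(2) cover by blast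
qed

lemma K:
  assumes tree: "rooted_binary_tree X T"
    and abm: "\<forall>c. internal T c \<longrightarrow> is_mrca T c (fst (ab c)) (snd (ab c))"
    and P: "P \<in> Ssol X k T ab"
  shows "\<forall>d x x' Z. card d = n \<longrightarrow> d \<in> T \<longrightarrow> x \<in> d \<longrightarrow> x' \<in> d \<longrightarrow> Z \<subseteq> X - d \<longrightarrow> R X k P Z x x'"
proof (induction n rule: less_induct)
  case (less n)
  note tf = tree_facts[OF tree]
  show ?case
  proof (intro allI impI)
    fix d x x' Z
    assume cd: "card d = n" and dT: "d \<in> T" and xd: "x \<in> d" and x'd: "x' \<in> d" and Z: "Z \<subseteq> X - d"
    have dX: "d \<subseteq> X" "finite d" using tf dT by auto
    show "R X k P Z x x'"
    proof (cases "2 \<le> card d")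
      case False
      then have "card d \<le> Suc 0" by simp
      then have "x = x'" using dX(2) xd x'd card_le_Suc0_iff_eq by blast
      then show ?thesis by (simp add: R_refl)
    next
      case True
      define p where "p = fst (ab d)"
      define q where "q = snd (ab d)"
      have int: "internal T d" unfolding internal_def using dT True by simp
      have m: "is_mrca T d p q" using abm int unfolding p_def q_def by blast
      have pq: "p \<noteq> q" by (rule mrca_neq[OF tree m True])
      have pd: "p \<in> d" and qd: "q \<in> d" using m unfolding is_mrca_def by auto
      have Sv: "satisfies_Sv X k d p q P" using P int unfolding Ssol_def p_def q_def by blast
      have Sim: "Sim X k P ((X - d) \<union> {p, q}) p q" by (rule Sv_Sim[OF dX(1) pd qd pq Sv])
      have pZ: "p \<notin> Z" and qZ: "q \<notin> Z" using Z pd qd by auto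
      have sub1: "insert p Z \<subseteq> (X - d) \<union> {p, q}" using Z by auto
      have sub2: "(X - d) \<union> {p, q} \<subseteq> X" using dX pd qd by auto
      have "Sim X k P (insert p Z) p q" by (rule Sim_restrict[OF tf(1) Sim sub1 sub2])
      then have Rpq: "R X k P Z p q" using R_Sim[of p X q Z k P] dX pd qd pZ qZ by blast
      have Rqp: "R X k P Z q p" by (rule R_sym[OF Rpq pZ])
      obtain e1 e2 where e: "e1 \<in> T" "e2 \<in> T" "e1 \<subset> d" "e2 \<subset> d" "e1 \<inter> e2 = {}" "p \<in> e1" "q \<in> e2"
        "\<forall>y\<in>d. y \<in> e1 \<or> y \<in> e2"
        using TL[OF tree dT True m] by blast
      have c1: "card e1 < n" using psubset_card_mono[OF dX(2) e(3)] cd by simp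
      have c2: "card e2 < n" using psubset_card_mono[OF dX(2) e(4)] cd by simp
      have Z1: "Z \<subseteq> X - e1" and Z2: "Z \<subseteq> X - e2" using Z e(3,4) by auto
      have toP: "R X k P Z y p" if y: "y \<in> d" for y
      proof -
        have "y \<in> e1 \<or> y \<in> e2" using e(8) y by blast
        then show ?thesis
        proof
          assume "y \<in> e1"
          then show ?thesis using less.IH[OF c1] e(1,6) Z1 by blast
        next
          assume "y \<in> e2"
          then have "R X k P Z y q" using less.IH[OF c2] e(2,7) Z2 by blast
          then show ?thesis using R_trans[OF _ Rqp qZ] by blast
        qed
      qed
      have "R X k P Z p x'" using R_sym[OF toP[OF x'd]] Z x'd by blast
      then show ?thesis using R_trans[OF toP[OF xd] _ pZ] by blast
    qed
  qed
qed

lemma FIN: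
  assumes R1: "R X k P (insert b Z) a p" and R2: "R X k P (insert p Z) b q"
    and sym: "\<And>j. marg X k (insert p (insert q Z)) P j = marg X k (insert p (insert q Z)) P (j \<circ> tau p q)"
    and dist: "a \<noteq> b" "p \<noteq> q" "p \<noteq> b" "a \<notin> Z" "b \<notin> Z" "p \<notin> Z" "q \<notin> Z"
  shows "marg X k (insert a (insert b Z)) P j = marg X k (insert a (insert b Z)) P (j \<circ> tau a b)"
proof -
  let ?W = "insert p (insert q Z)"
  let ?J = "\<lambda>j. j(p := j a, q := j b)"
  have G: "marg X k (insert a (insert b Z)) P j = marg X k ?W P (?J j)" for j
  proof -
    have "marg X k (insert a (insert b Z)) P j = marg X k (insert p (insert b Z)) P (j(p := j a))"
      using R1 unfolding R_def by blast
    also have "\<dots> = marg X k (insert b (insert p Z)) P (j(p := j a))" by (simp add: insert_commute)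
    also have "\<dots> = marg X k (insert q (insert p Z)) P ((j(p := j a))(q := (j(p := j a)) b))"
      using R2 unfolding R_def by blast
    also have "(j(p := j a))(q := (j(p := j a)) b) = ?J j" using dist(3) by simp
    also have "insert q (insert p Z) = ?W" by (simp add: insert_commute)
    finally show ?thesis .
  qed
  have pt: "?J j (tau p q w) = ?J (j \<circ> tau a b) w" if w: "w \<in> ?W" for w
  proof -
    have "w = p \<or> w = q \<or> w \<in> Z" using w by blast
    then show ?thesis
    proof (elim disjE)
      assume "w = p" then show ?thesis using dist by simp
    next
      assume "w = q" then show ?thesis using dist by simp
    next
      assume wZ: "w \<in> Z"
      then have "w \<noteq> p" "w \<noteq> q" "w \<noteq> a" "w \<noteq> b" using dist by auto
      then show ?thesis by simp
    qed
  qed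
  have "marg X k (insert a (insert b Z)) P j = marg X k ?W P (?J j)" by (rule G)
  also have "\<dots> = marg X k ?W P (?J j \<circ> tau p q)" by (rule sym)
  also have "\<dots> = marg X k ?W P (?J (j \<circ> tau a b))" by (rule marg_cong) (use pt in simp)
  also have "\<dots> = marg X k (insert a (insert b Z)) P (j \<circ> tau a b)" by (rule G[symmetric])
  finally show ?thesis .
qed

lemma upd_swap_eq: "j(a := j b, b := j a) = j \<circ> tau a b"
  by (auto simp: fun_eq_iff tau_def)

lemma Ssol_sub:
  assumes tree: "rooted_binary_tree X T"
    and abm: "\<forall>c. internal T c \<longrightarrow> is_mrca T c (fst (ab c)) (snd (ab c))"
    and P: "P \<in> Ssol X k T ab"
  shows "P \<in> Lspace X k T"
  unfolding Lspace_def
proof (intro CollectI allI impI)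
  fix Y a b assume YX: "Y \<subseteq> X" and tc: "two_clade T Y a b"
  note tf = tree_facts[OF tree]
  have ab: "a \<noteq> b" "a \<in> Y" "b \<in> Y" using tc unfolding two_clade_def by auto
  obtain c' where c': "c' \<in> T" "c' \<inter> Y = {a, b}" using tc unfolding two_clade_def by blast
  let ?Q = "\<lambda>d. d \<in> T \<and> a \<in> d \<and> b \<in> d"
  have "?Q c'" using c' by blast
  then obtain c where c: "?Q c" and cmin: "\<forall>d. ?Q d \<longrightarrow> card c \<le> card d"
    using ex_has_least_nat[of ?Q c' card] by blast
  have fc: "finite c" using tf(4) c by blast
  have csub: "c \<subseteq> d" if "?Q d" for d
  proof -
    have "c \<subseteq> d \<or> d \<subseteq> c \<or> c \<inter> d = {}" using tf(5) c that by blast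
    then show ?thesis
    proof (elim disjE)
      assume "d \<subseteq> c"
      moreover have "card c \<le> card d" using cmin that by blast
      ultimately have "d = c" using card_seteq[OF fc] by blast
      then show ?thesis by simp
    next
      assume "c \<inter> d = {}" then show ?thesis using c that by blast
    qed simp
  qed
  have mab: "is_mrca T c a b" unfolding is_mrca_def using c csub by blast
  have cY: "c \<inter> Y \<subseteq> {a, b}" using csub[OF \<open>?Q c'\<close>] c' by blast
  have "card {a, b} \<le> card c" using c fc by (intro card_mono) auto
  then have c2: "2 \<le> card c" using ab(1) by simp
  have cX: "c \<subseteq> X" using tf(3) c by blast
  have int: "internal T c" unfolding internal_def using c c2 by blast
  define p where "p = fst (ab c)"
  define q where "q = snd (ab c)"
  have m: "is_mrca T c p q" using abm int unfolding p_def q_def by blast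
  have pq: "p \<noteq> q" by (rule mrca_neq[OF tree m c2])
  have pc: "p \<in> c" and qc: "q \<in> c" using m unfolding is_mrca_def by auto
  have ac: "a \<in> c" and bc: "b \<in> c" using c by auto
  have Sv: "satisfies_Sv X k c p q P" using P int unfolding Ssol_def p_def q_def by blast
  have Sim: "Sim X k P ((X - c) \<union> {p, q}) p q" by (rule Sv_Sim[OF cX pc qc pq Sv])
  define Z where "Z = Y - {a, b}"
  have Z: "Z \<subseteq> X - c" using YX cY unfolding Z_def by blast
  have Yeq: "Y = insert a (insert b Z)" using ab unfolding Z_def by blast
  have sub1: "insert p (insert q Z) \<subseteq> (X - c) \<union> {p, q}" using Z by auto
  have sub2: "(X - c) \<union> {p, q} \<subseteq> X" using cX pc qc by auto
  have SimW: "Sim X k P (insert p (insert q Z)) p q" by (rule Sim_restrict[OF tf(1) Sim sub1 sub2])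
  have pX: "p \<in> X" "q \<in> X" using pc qc cX by auto
  have sym: "\<And>j. marg X k (insert p (insert q Z)) P j = marg X k (insert p (insert q Z)) P (j \<circ> tau p q)"
    by (rule Sim_swap[OF SimW pX]) auto
  have nZ: "a \<notin> Z" "b \<notin> Z" "p \<notin> Z" "q \<notin> Z" using Z ac bc pc qc by auto
  obtain ep eq where e: "ep \<in> T" "eq \<in> T" "ep \<subset> c" "eq \<subset> c" "ep \<inter> eq = {}" "p \<in> ep" "q \<in> eq"
    "\<forall>y\<in>c. y \<in> ep \<or> y \<in> eq"
    using TL[OF tree c[THEN conjunct1] c2 m] by blast
  have notboth: "\<not> (a \<in> e \<and> b \<in> e)" if "e \<subset> c" "e \<in> T" for e
    using that csub by blast
  have Kf: "R X k P W x x'" if "e \<in> T" "x \<in> e" "x' \<in> e" "W \<subseteq> X - e" for e x x' W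
    using K[OF tree abm P, of "card e"] that by blast
  have main: "\<forall>j. marg X k Y P j = marg X k Y P (j \<circ> tau a b)"
  proof -
    have "a \<in> ep \<or> a \<in> eq" using e(8) ac by blast
    then show ?thesis
    proof
      assume aep: "a \<in> ep"
      then have beq: "b \<in> eq" using e(8) bc notboth[OF e(3,1)] by blast
      have W1: "insert b Z \<subseteq> X - ep" using Z e(3,5) beq bc cX by blast
      have W2: "insert p Z \<subseteq> X - eq" using Z e(4,5,6) pc cX by blast
      have R1: "R X k P (insert b Z) a p" by (rule Kf[OF e(1) aep e(6) W1])
      have R2: "R X k P (insert p Z) b q" by (rule Kf[OF e(2) beq e(7) W2])
      have pb: "p \<noteq> b" using e(5,6) beq by blast
      show ?thesis using FIN[OF R1 R2 sym ab(1) pq pb nZ] Yeq by simp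
    next
      assume aeq: "a \<in> eq"
      then have bep: "b \<in> ep" using e(8) bc notboth[OF e(4,2)] by blast
      have W1: "insert a Z \<subseteq> X - ep" using Z e(3,5) aeq ac cX by blast
      have W2: "insert p Z \<subseteq> X - eq" using Z e(4,5,6) pc cX by blast
      have R1: "R X k P (insert a Z) b p" by (rule Kf[OF e(1) bep e(6) W1])
      have R2: "R X k P (insert p Z) a q" by (rule Kf[OF e(2) aeq e(7) W2])
      have pa: "p \<noteq> a" using e(5,6) aeq by blast
      have "\<forall>j. marg X k (insert b (insert a Z)) P j = marg X k (insert b (insert a Z)) P (j \<circ> tau b a)"
        using FIN[OF R1 R2 sym ab(1)[symmetric] pq pa nZ(2,1,3,4)] by blast
      then show ?thesis using Yeq by (simp add: insert_commute tau_comm)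
    qed
  qed
  show "swap_invariant X k Y a b P"
    unfolding swap_invariant_def upd_swap_eq using main by blast
qed

lemma Lspace_sub:
  assumes tree: "rooted_binary_tree X T"
    and abm: "\<forall>c. internal T c \<longrightarrow> is_mrca T c (fst (ab c)) (snd (ab c))"
    and P: "P \<in> Lspace X k T"
  shows "P \<in> Ssol X k T ab"
  unfolding Ssol_def
proof (intro CollectI allI impI)
  fix c assume int: "internal T c"
  note tf = tree_facts[OF tree]
  define p where "p = fst (ab c)"
  define q where "q = snd (ab c)"
  have c2: "2 \<le> card c" and cT: "c \<in> T" using int unfolding internal_def by auto
  have m: "is_mrca T c p q" using abm int unfolding p_def q_def by blast
  have pq: "p \<noteq> q" by (rule mrca_neq[OF tree m c2])
  have pc: "p \<in> c" and qc: "q \<in> c" using m unfolding is_mrca_def by auto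
  have cX: "c \<subseteq> X" using tf(3) cT by blast
  let ?Y = "(X - c) \<union> {p, q}"
  have YX: "?Y \<subseteq> X" using cX pc qc by auto
  have "c \<inter> ?Y = {p, q}" using pc qc by auto
  then have tc: "two_clade T ?Y p q" unfolding two_clade_def using pq cT by blast
  have si: "swap_invariant X k ?Y p q P" using P YX tc unfolding Lspace_def by blast
  show "satisfies_Sv X k c (fst (ab c)) (snd (ab c)) P"
    unfolding p_def[symmetric] q_def[symmetric] satisfies_Sv_def
  proof (intro ballI allI impI)
    fix l s t assume l: "l \<in> idx (X - c) k" and s: "s < k" and t: "t < k"
    let ?j = "l(p := s, q := t)"
    have j: "?j \<in> idx ?Y k" using l s t pq unfolding PiE_iff extensional_def by auto
    have "marg X k ?Y P ?j = marg X k ?Y P (?j(p := ?j q, q := ?j p))" using si j unfolding swap_invariant_def by blast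
    also have "?j(p := ?j q, q := ?j p) = l(p := t, q := s)" using pq by (auto simp: fun_eq_iff)
    finally show "marg X k ?Y P ?j = marg X k ?Y P (l(p := t, q := s))" .
  qed
qed

theorem lemma4p2:
  fixes X :: "'a set" and T :: "'a set set" and \<kappa> :: nat
    and ab :: "'a set \<Rightarrow> 'a \<times> 'a"
  assumes "rooted_binary_tree X T"
    and "2 \<le> \<kappa>"
    and "\<forall>c. internal T c \<longrightarrow> is_mrca T c (fst (ab c)) (snd (ab c))"
  shows "Ssol X \<kappa> T ab = Lspace X \<kappa> T"
  using Ssol_sub[OF assms(1,3)] Lspace_sub[OF assms(1,3)] by blast

end
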